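(* Let $n,d\in\mathbb{N}_*$, let $p$ be a prime number with $p>d^n$, and let $K$ be a commutative domain of characteristic $p$. Then $\mathrm{CJC}(n,p,d,K)$ holds if and only if $\mathrm{NJC}(n,p,d,K)$ holds.
   Context: $\mathbb{N}_*=\mathbb{N}\setminus\{0\}$; for a domain $R$, $R_*^{-1}R$ is its fraction field, with $R_*=R\setminus\{0\}$; $K^*$ is the unit group of $K$; $p\mathbb{N}=\{pk:k\in\mathbb{N}\}$. For $n,d\in\mathbb{N}_*$, $p$ equal to $0$ or a prime, and $K$ a commutative domain of characteristic $p$, the statement $\mathrm{CJC}(n,p,d,K)$ is: for every pair of polynomial $K$-algebras $A$, $B$ in $n$ indeterminates and every injective $K$-algebra homomorphism $\phi:A\to B$ such that $\deg\phi(X)\le d$ for each indeterminate $X$ of $A$, letting $J(\phi)$ be the Jacobian matrix of $(\phi(X_1),\dots,\phi(X_n))$ (where $X_1,\dots,X_n$ are the indeterminates of $A$) with respect to the indeterminates of $B$, the following are equivalent: (1) $\phi$ is an isomorphism; (2) $\det J(\phi)\in K^*$ and $[B_*^{-1}B:\phi(A_* )^{-1}\phi(A)]\notin p\mathbb{N}$. The statement $\mathrm{NJC}(n,p,d,K)$ is the same statement with the condition $[B_*^{-1}B:\phi(A_* )^{-1}\phi(A)]\notin p\mathbb{N}$ deleted from (2), i.e. $\phi$ is an isomorphism if and only if $\det J(\phi)\in K^*$. *)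

theory Defs
  imports "HOL-Library.Poly_Mapping" "HOL-Computational_Algebra.Fraction_Field"
    "HOL-Combinatorics.Permutations" "HOL-Library.Extended_Nat" "HOL-Computational_Algebra.Primes"
begin

text \<open>Polynomials over K in the indeterminates X_0, X_1, ... :
  finitely supported maps from monomials (exponent vectors) to coefficients.\<close>
type_synonym 'a mpoly = "(nat \<Rightarrow>\<^sub>0 nat) \<Rightarrow>\<^sub>0 'a"

definition polys_n :: "nat \<Rightarrow> 'a::zero mpoly set" where
  "polys_n n = {f. \<forall>m \<in> Poly_Mapping.keys f. Poly_Mapping.keys m \<subseteq> {..<n}}"

definition Var :: "nat \<Rightarrow> 'a::{zero,one} mpoly" where
  "Var i = Poly_Mapping.single (Poly_Mapping.single i 1) 1"

definition Const :: "'a::zero \<Rightarrow> 'a mpoly" where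
  "Const c = Poly_Mapping.single 0 c"

text \<open>Total degree (the zero polynomial gets degree 0).\<close>
definition tdeg :: "'a::zero mpoly \<Rightarrow> nat" where
  "tdeg f = Max (insert 0 ((\<lambda>m. sum (Poly_Mapping.lookup m) (Poly_Mapping.keys m)) ` Poly_Mapping.keys f))"

definition pderiv_mp :: "nat \<Rightarrow> 'a::comm_ring_1 mpoly \<Rightarrow> 'a mpoly" where
  "pderiv_mp j g = (\<Sum>m\<in>Poly_Mapping.keys g. Poly_Mapping.single (m - Poly_Mapping.single j 1)
                                    (of_nat (Poly_Mapping.lookup m j) * Poly_Mapping.lookup g m))"

definition is_Kalg_hom :: "nat \<Rightarrow> ('a::comm_ring_1 mpoly \<Rightarrow> 'a mpoly) \<Rightarrow> bool" where
  "is_Kalg_hom n \<phi> \<longleftrightarrow>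
     (\<forall>f\<in>polys_n n. \<phi> f \<in> polys_n n) \<and>
     (\<forall>f\<in>polys_n n. \<forall>g\<in>polys_n n. \<phi> (f + g) = \<phi> f + \<phi> g \<and> \<phi> (f * g) = \<phi> f * \<phi> g) \<and>
     (\<forall>c. \<phi> (Const c) = Const c)"

definition jac_det :: "nat \<Rightarrow> ('a::comm_ring_1 mpoly \<Rightarrow> 'a mpoly) \<Rightarrow> 'a mpoly" where
  "jac_det n \<phi> = (\<Sum>\<sigma>\<in>{\<sigma>. \<sigma> permutes {..<n}}.
        of_int (sign \<sigma>) * (\<Prod>i<n. pderiv_mp (\<sigma> i) (\<phi> (Var i))))"

definition frac_B :: "nat \<Rightarrow> 'a::idom mpoly fract set" where
  "frac_B n = {Fraction_Field.Fract a b | a b. a \<in> polys_n n \<and> b \<in> polys_n n \<and> b \<noteq> 0}"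

definition frac_img :: "nat \<Rightarrow> ('a::idom mpoly \<Rightarrow> 'a mpoly) \<Rightarrow> 'a mpoly fract set" where
  "frac_img n \<phi> = {Fraction_Field.Fract (\<phi> a) (\<phi> b) | a b. a \<in> polys_n n \<and> b \<in> polys_n n \<and> b \<noteq> 0}"

text \<open>Linear independence over a subfield L, and the degree [E : L] (dimension of E as
  an L-vector space, i.e. the supremum of the sizes of L-linearly independent finite subsets;
  infinity if unbounded).\<close>
definition lin_indep_over :: "'b::field set \<Rightarrow> 'b set \<Rightarrow> bool" where
  "lin_indep_over L S \<longleftrightarrow>
     (\<forall>c. (\<forall>s\<in>S. c s \<in> L) \<and> (\<Sum>s\<in>S. c s * s) = 0 \<longrightarrow> (\<forall>s\<in>S. c s = 0))"

definition ext_degree :: "'b::field set \<Rightarrow> 'b set \<Rightarrow> enat" where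
  "ext_degree E L = Sup {enat (card S) | S. finite S \<and> S \<subseteq> E \<and> lin_indep_over L S}"

definition CJC :: "nat \<Rightarrow> nat \<Rightarrow> nat \<Rightarrow> 'a::idom itself \<Rightarrow> bool" where
  "CJC n p d (_::'a itself) \<longleftrightarrow>
     (\<forall>\<phi> :: 'a mpoly \<Rightarrow> 'a mpoly.
        is_Kalg_hom n \<phi> \<and> inj_on \<phi> (polys_n n) \<and> (\<forall>i<n. tdeg (\<phi> (Var i)) \<le> d) \<longrightarrow>
        (bij_betw \<phi> (polys_n n) (polys_n n) \<longleftrightarrow>
           (jac_det n \<phi> \<in> Const ` {c. c dvd 1} \<and>
            \<not> (\<exists>k. ext_degree (frac_B n) (frac_img n \<phi>) = enat (p * k)))))"

definition NJC :: "nat \<Rightarrow> nat \<Rightarrow> nat \<Rightarrow> 'a::idom itself \<Rightarrow> bool" where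
  "NJC n p d (_::'a itself) \<longleftrightarrow>
     (\<forall>\<phi> :: 'a mpoly \<Rightarrow> 'a mpoly.
        is_Kalg_hom n \<phi> \<and> inj_on \<phi> (polys_n n) \<and> (\<forall>i<n. tdeg (\<phi> (Var i)) \<le> d) \<longrightarrow>
        (bij_betw \<phi> (polys_n n) (polys_n n) \<longleftrightarrow> jac_det n \<phi> \<in> Const ` {c. c dvd 1}))"

end

theory Submission
  imports Defs Complex_Main
begin

definition mdeg :: "(nat \<Rightarrow>\<^sub>0 nat) \<Rightarrow> nat" where
  "mdeg m = sum (Poly_Mapping.lookup m) (Poly_Mapping.keys m)"

lemma mdeg_superset: "finite A \<Longrightarrow> Poly_Mapping.keys m \<subseteq> A \<Longrightarrow> mdeg m = sum (Poly_Mapping.lookup m) A"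
  unfolding mdeg_def by (rule sum.mono_neutral_left) (auto simp: in_keys_iff)

lemma mdeg_add: "mdeg (a + b) = mdeg a + mdeg b"
proof -
  let ?A = "Poly_Mapping.keys a \<union> Poly_Mapping.keys b"
  have "Poly_Mapping.keys (a+b) \<subseteq> ?A" by (rule keys_add)
  then have "mdeg (a+b) = sum (Poly_Mapping.lookup (a+b)) ?A" by (simp add: mdeg_superset)
  also have "\<dots> = sum (Poly_Mapping.lookup a) ?A + sum (Poly_Mapping.lookup b) ?A"
    by (simp add: lookup_add sum.distrib)
  also have "\<dots> = mdeg a + mdeg b" using mdeg_superset[of ?A a] mdeg_superset[of ?A b] by simp
  finally show ?thesis .
qed

lemma mdeg_single: "mdeg (Poly_Mapping.single i k) = k"
  by (simp add: mdeg_def)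

lemma mdeg_zero[simp]: "mdeg 0 = 0"
  by (simp add: mdeg_def)

lemma tdeg_le_iff: "tdeg f \<le> T \<longleftrightarrow> (\<forall>m\<in>Poly_Mapping.keys f. mdeg m \<le> T)"
proof -
  have e: "(\<lambda>m. sum (Poly_Mapping.lookup m) (Poly_Mapping.keys m)) = mdeg"
    by (simp add: mdeg_def fun_eq_iff)
  show ?thesis unfolding tdeg_def e by auto
qed

lemma tdeg_ge: "m \<in> Poly_Mapping.keys f \<Longrightarrow> mdeg m \<le> tdeg f"
  using tdeg_le_iff[of f "tdeg f"] by auto

lemma tdeg_mult: "tdeg (f * g) \<le> tdeg f + tdeg g"
proof -
  have "mdeg m \<le> tdeg f + tdeg g" if "m \<in> Poly_Mapping.keys (f*g)" for m
  proof -
    from that keys_mult obtain a b where "m = a + b" "a \<in> Poly_Mapping.keys f" "b \<in> Poly_Mapping.keys g"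
      by blast
    then show ?thesis using tdeg_ge[of a f] tdeg_ge[of b g] by (simp add: mdeg_add)
  qed
  then show ?thesis by (simp add: tdeg_le_iff)
qed

lemma tdeg_one: "tdeg (1::'a::comm_ring_1 mpoly) = 0"
  by (simp add: tdeg_le_iff[of _ 0, simplified])

lemma polys_n_mult: "f \<in> polys_n n \<Longrightarrow> g \<in> polys_n n \<Longrightarrow> (f * g :: 'a::comm_ring_1 mpoly) \<in> polys_n n"
proof -
  assume f: "f \<in> polys_n n" and g: "g \<in> polys_n n"
  have "Poly_Mapping.keys m \<subseteq> {..<n}" if m: "m \<in> Poly_Mapping.keys (f * g)" for m
  proof -
    from m keys_mult obtain a b where "m = a + b" "a \<in> Poly_Mapping.keys f" "b \<in> Poly_Mapping.keys g"
      by blast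
    have "Poly_Mapping.keys a \<subseteq> {..<n}" "Poly_Mapping.keys b \<subseteq> {..<n}"
      using f g \<open>a \<in> _\<close> \<open>b \<in> _\<close> unfolding polys_n_def by auto
    then show ?thesis using keys_add[of a b] \<open>m = a + b\<close> by auto
  qed
  then show ?thesis unfolding polys_n_def by simp
qed

lemma polys_n_add: "f \<in> polys_n n \<Longrightarrow> g \<in> polys_n n \<Longrightarrow> f + g \<in> polys_n n"
proof -
  assume f: "f \<in> polys_n n" and g: "g \<in> polys_n n"
  have "Poly_Mapping.keys m \<subseteq> {..<n}" if m: "m \<in> Poly_Mapping.keys (f + g)" for m
  proof -
    have "m \<in> Poly_Mapping.keys f \<or> m \<in> Poly_Mapping.keys g" using m keys_add[of f g] by auto
    then show ?thesis using f g unfolding polys_n_def by auto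
  qed
  then show ?thesis unfolding polys_n_def by simp
qed

lemma polys_n_zero: "0 \<in> polys_n n"
  unfolding polys_n_def by simp

lemma polys_n_sum: "(\<And>i. i \<in> I \<Longrightarrow> g i \<in> polys_n n) \<Longrightarrow> sum g I \<in> polys_n n"
  by (induction I rule: infinite_finite_induct) (auto simp: polys_n_zero polys_n_add)

lemma polys_n_single: "Poly_Mapping.keys a \<subseteq> {..<n} \<Longrightarrow> Poly_Mapping.single a c \<in> polys_n n"
  unfolding polys_n_def by simp

lemma polys_n_one: "(1::'a::comm_ring_1 mpoly) \<in> polys_n n"
  unfolding polys_n_def by simp

lemma polys_n_Var: "i < n \<Longrightarrow> (Var i :: 'a::comm_ring_1 mpoly) \<in> polys_n n"
  unfolding Var_def by (rule polys_n_single) simp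

lemma polys_n_Const: "Const c \<in> polys_n n"
  unfolding Const_def by (rule polys_n_single) simp

lemma lookup_Const_mult: "Poly_Mapping.lookup (Const c * f) m = (c::'a::comm_ring_1) * Poly_Mapping.lookup f m"
  unfolding Const_def mult_map_scale_conv_mult[symmetric]
  by (simp add: map.rep_eq when_def)

lemma Const_one: "Const 1 = (1::'a::comm_ring_1 mpoly)"
  by (simp add: Const_def)

lemma Const_zero: "Const 0 = (0::'a::comm_ring_1 mpoly)"
  by (simp add: Const_def)

lemma Const_mult_single: "Const c * Poly_Mapping.single a 1 = Poly_Mapping.single a (c::'a::comm_ring_1)"
  by (simp add: Const_def mult_single)

context
  fixes n :: nat and \<phi> :: "'a::comm_ring_1 mpoly \<Rightarrow> 'a mpoly"
  assumes hom: "is_Kalg_hom n \<phi>"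
begin

lemma hom_in: "f \<in> polys_n n \<Longrightarrow> \<phi> f \<in> polys_n n"
  using hom unfolding is_Kalg_hom_def by blast

lemma hom_add: "f \<in> polys_n n \<Longrightarrow> g \<in> polys_n n \<Longrightarrow> \<phi> (f + g) = \<phi> f + \<phi> g"
  using hom unfolding is_Kalg_hom_def by blast

lemma hom_mult: "f \<in> polys_n n \<Longrightarrow> g \<in> polys_n n \<Longrightarrow> \<phi> (f * g) = \<phi> f * \<phi> g"
  using hom unfolding is_Kalg_hom_def by blast

lemma hom_Const: "\<phi> (Const c) = Const c"
  using hom unfolding is_Kalg_hom_def by blast

lemma hom_zero: "\<phi> 0 = 0"
  using hom_Const[of 0] by (simp add: Const_zero)

lemma hom_one: "\<phi> 1 = 1"
  using hom_Const[of 1] by (simp add: Const_one)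

lemma hom_smult: "f \<in> polys_n n \<Longrightarrow> \<phi> (Const c * f) = Const c * \<phi> f"
  by (simp add: hom_mult polys_n_Const hom_Const)

lemma hom_sum: "(\<And>i. i \<in> I \<Longrightarrow> g i \<in> polys_n n) \<Longrightarrow> \<phi> (sum g I) = (\<Sum>i\<in>I. \<phi> (g i))"
proof (induction I rule: infinite_finite_induct)
  case (insert x F)
  then show ?case by (simp add: hom_add polys_n_sum)
qed (auto simp: hom_zero)

lemma hom_mono_in: "Poly_Mapping.keys a \<subseteq> {..<n} \<Longrightarrow> \<phi> (Poly_Mapping.single a 1) \<in> polys_n n"
  by (simp add: hom_in polys_n_single)

lemma hom_mono:
  assumes deg: "\<forall>i<n. tdeg (\<phi> (Var i)) \<le> d"
  shows "Poly_Mapping.keys a \<subseteq> {..<n} \<Longrightarrow> tdeg (\<phi> (Poly_Mapping.single a 1)) \<le> d * mdeg a"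
proof (induction "mdeg a" arbitrary: a)
  case 0
  then have "\<forall>k\<in>Poly_Mapping.keys a. Poly_Mapping.lookup a k = 0" by (simp add: mdeg_def)
  then have z: "\<And>k. k \<in> Poly_Mapping.keys a \<Longrightarrow> Poly_Mapping.lookup a k = 0" by blast
  have "a = 0"
  proof (rule poly_mapping_eqI)
    fix k show "Poly_Mapping.lookup a k = Poly_Mapping.lookup 0 k"
    proof (cases "k \<in> Poly_Mapping.keys a")
      case True then show ?thesis using z by simp
    next
      case False then show ?thesis by (simp add: in_keys_iff)
    qed
  qed
  then show ?case by (simp add: hom_one tdeg_one)
next
  case (Suc k)
  then have "a \<noteq> 0" by auto
  then have "Poly_Mapping.keys a \<noteq> {}" by simp
  then obtain i where i: "i \<in> Poly_Mapping.keys a" by blast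
  have "i < n" using i Suc.prems by auto
  define b where "b = a - Poly_Mapping.single i 1"
  have ab: "a = b + Poly_Mapping.single i 1"
    by (rule poly_mapping_eqI) (use i in \<open>auto simp: b_def lookup_add lookup_single when_def in_keys_iff minus_poly_mapping.rep_eq\<close>)
  have kb: "Poly_Mapping.keys b \<subseteq> {..<n}"
    using Suc.prems unfolding b_def
  proof (intro subsetI)
    fix x assume "Poly_Mapping.keys a \<subseteq> {..<n}" "x \<in> Poly_Mapping.keys (a - Poly_Mapping.single i 1)"
    then have "Poly_Mapping.lookup a x - Poly_Mapping.lookup (Poly_Mapping.single i 1) x \<noteq> 0"
      by (simp add: in_keys_iff minus_poly_mapping.rep_eq)
    then have "x \<in> Poly_Mapping.keys a" by (simp add: in_keys_iff)
    then show "x \<in> {..<n}" using \<open>Poly_Mapping.keys a \<subseteq> {..<n}\<close> by blast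
  qed 
  have mb: "k = mdeg b" using Suc.hyps(2) ab by (simp add: mdeg_add mdeg_single)
  have sa: "Poly_Mapping.single a (1::'a) = Poly_Mapping.single b 1 * Var i"
    by (simp add: ab Var_def mult_single)
  have pa: "\<phi> (Poly_Mapping.single a 1) = \<phi> (Poly_Mapping.single b 1) * \<phi> (Var i)"
    unfolding sa by (rule hom_mult[OF polys_n_single[OF kb] polys_n_Var[OF \<open>i<n\<close>]])
  have "tdeg (\<phi> (Poly_Mapping.single a 1)) \<le> tdeg (\<phi> (Poly_Mapping.single b 1)) + tdeg (\<phi> (Var i))"
    unfolding pa by (rule tdeg_mult)
  also have "\<dots> \<le> d * k + d"
    using Suc.hyps(1)[OF mb kb] deg \<open>i<n\<close> unfolding mb by (intro add_mono) auto
  finally show ?case using Suc.hyps(2)[symmetric] by (simp add: algebra_simps)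
qed

end

definition Mon :: "nat \<Rightarrow> nat \<Rightarrow> (nat \<Rightarrow>\<^sub>0 nat) set" where
  "Mon n T = {a. Poly_Mapping.keys a \<subseteq> {..<n} \<and> mdeg a \<le> T}"

definition Lst :: "nat \<Rightarrow> nat \<Rightarrow> (nat \<Rightarrow>\<^sub>0 nat) \<Rightarrow> nat list" where
  "Lst n T a = map (Poly_Mapping.lookup a) [0..<n] @ [T - mdeg a]"

lemma mdeg_lt: "Poly_Mapping.keys a \<subseteq> {..<n} \<Longrightarrow> mdeg a = sum (Poly_Mapping.lookup a) {..<n}"
  by (simp add: mdeg_superset)

lemma sum_list_map_upt: "sum_list (map f [0..<n]) = sum f {..<n}"
  by (simp add: interv_sum_list_conv_sum_set_nat atLeast0LessThan)

lemma Lst_in: "a \<in> Mon n T \<Longrightarrow> Lst n T a \<in> {l. length l = n+1 \<and> sum_list l = T}"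
  unfolding Mon_def Lst_def by (simp add: sum_list_map_upt mdeg_lt[symmetric])

lemma Lst_inj: "inj_on (Lst n T) (Mon n T)"
proof (rule inj_onI)
  fix a b assume a: "a \<in> Mon n T" and b: "b \<in> Mon n T" and e: "Lst n T a = Lst n T b"
  from e have "map (Poly_Mapping.lookup a) [0..<n] = map (Poly_Mapping.lookup b) [0..<n]"
    unfolding Lst_def by (simp add: append_eq_append_conv)
  then have lt: "\<forall>i<n. Poly_Mapping.lookup a i = Poly_Mapping.lookup b i"
    by (simp add: map_eq_conv)
  show "a = b"
  proof (rule poly_mapping_eqI)
    fix i show "Poly_Mapping.lookup a i = Poly_Mapping.lookup b i"
    proof (cases "i < n")
      case True then show ?thesis using lt by simp
    next
      case False
      then have "i \<notin> Poly_Mapping.keys a" "i \<notin> Poly_Mapping.keys b" using a b by (auto simp: Mon_def)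
      then show ?thesis by (simp add: in_keys_iff)
    qed
  qed
qed

lemma Lst_surj:
  assumes l: "length l = n+1" "sum_list l = T"
  shows "l \<in> Lst n T ` Mon n T"
proof -
  define a where "a = Poly_Mapping.nth (take n l)"
  have la: "Poly_Mapping.lookup a i = (if i < n then l ! i else 0)" for i
    using l by (simp add: a_def nth_default_def)
  have ka: "Poly_Mapping.keys a \<subseteq> {..<n}"
    by (auto simp: in_keys_iff la split: if_splits)
  have "mdeg a = sum (Poly_Mapping.lookup a) {..<n}" using ka by (rule mdeg_lt)
  also have "\<dots> = sum ((!) l) {..<n}" by (simp add: la)
  also have "\<dots> = sum_list (take n l)"
    using l by (simp add: sum_list_sum_nth atLeast0LessThan min_def)
  finally have ma: "mdeg a = sum_list (take n l)" .
  have ldec: "l = take n l @ [l ! n]"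
  proof (rule nth_equalityI)
    fix i assume "i < length l"
    then have "i < n \<or> i = n" using l by auto
    then show "l ! i = (take n l @ [l ! n]) ! i" using l by (auto simp: nth_append)
  qed (use l in simp)
  have "sum_list l = sum_list (take n l) + l ! n"
    by (subst ldec) simp
  then have mT: "mdeg a \<le> T" and last: "T - mdeg a = l ! n" using l ma by auto
  have "map (Poly_Mapping.lookup a) [0..<n] = take n l"
    using l by (intro nth_equalityI) (auto simp: la)
  then have "Lst n T a = l" unfolding Lst_def last using ldec by simp
  moreover have "a \<in> Mon n T" using ka mT by (simp add: Mon_def)
  ultimately show ?thesis by blast
qed

lemma Mon_card: "finite (Mon n T) \<and> card (Mon n T) = (T + n) choose n"
proof -
  have img: "Lst n T ` Mon n T = {l. length l = n+1 \<and> sum_list l = T}"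
    using Lst_in Lst_surj by blast
  have fin: "finite {l::nat list. length l = n+1 \<and> sum_list l = T}"
  proof -
    have "{l::nat list. length l = n+1 \<and> sum_list l = T} \<subseteq> {l. set l \<subseteq> {..T} \<and> length l = n+1}"
      by (auto simp: member_le_sum_list)
    moreover have "finite {l::nat list. set l \<subseteq> {..T} \<and> length l = n+1}"
      by (rule finite_lists_length_eq) simp
    ultimately show ?thesis by (rule finite_subset)
  qed
  have "card (Mon n T) = card {l::nat list. length l = n+1 \<and> sum_list l = T}"
    using card_image[OF Lst_inj, of n T] img by simp
  also have "\<dots> = (T + n) choose T" by (simp add: card_length_sum_list)
  also have "\<dots> = (T + n) choose n" using binomial_symmetric[of T "T+n"] by simp
  moreover have "finite (Mon n T)"
    using finite_imageD[of "Lst n T" "Mon n T"] img fin Lst_inj by simp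
  ultimately show ?thesis by simp
qed

lemma fact_add_prod: "fact (a + k) = fact a * (\<Prod>i\<in>{1..k}. a + i)"
proof (induction k)
  case (Suc k)
  have "{1..Suc k} = insert (Suc k) {1..k}" by auto
  then show ?case using Suc by (simp add: algebra_simps)
qed simp

lemma binom_prod: "fact n * ((a + n) choose n) = (\<Prod>i\<in>{1..n}. a + i)"
proof -
  have "fact n * fact a * ((a + n) choose n) = fact (a + n)"
    using binomial_fact_lemma[of n "a+n"] by simp
  then have "fact a * (fact n * ((a + n) choose n)) = fact a * (\<Prod>i\<in>{1..n}. a + i)"
    by (simp add: fact_add_prod algebra_simps)
  then show ?thesis by simp
qed

lemma asym_bound:
  fixes m n d D :: nat
  assumes H: "\<And>t. m * ((t + n) choose n) \<le> ((D + d * t) + n) choose n"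
  shows "m \<le> d ^ n"
proof -
  define c where "c = D + n"
  have key: "real m \<le> (real d + real c / real t) ^ n" if t: "t \<ge> 1" for t
  proof -
    have h1: "fact n * (m * ((t + n) choose n)) \<le> fact n * (((D + d * t) + n) choose n)"
      using H[of t] by (rule mult_le_mono2)
    have e1: "fact n * (m * ((t + n) choose n)) = m * (\<Prod>i\<in>{1..n}. t + i)"
      by (metis binom_prod mult.left_commute)
    have e2: "fact n * (((D + d * t) + n) choose n) = (\<Prod>i\<in>{1..n}. (D + d * t) + i)"
      by (rule binom_prod)
    have "m * (\<Prod>i\<in>{1..n}. t + i) \<le> (\<Prod>i\<in>{1..n}. (D + d * t) + i)"
      using h1 unfolding e1 e2 .
    moreover have "t ^ n \<le> (\<Prod>i\<in>{1..n}. t + i)"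
    proof -
      have "(\<Prod>i\<in>{1..n}. t) \<le> (\<Prod>i\<in>{1..n}. t + i)" by (rule prod_mono) simp
      then show ?thesis by simp
    qed
    moreover have "(\<Prod>i\<in>{1..n}. (D + d * t) + i) \<le> (d * t + c) ^ n"
    proof -
      have "(\<Prod>i\<in>{1..n}. (D + d * t) + i) \<le> (\<Prod>i\<in>{1..n}. d * t + c)"
        by (rule prod_mono) (auto simp: c_def)
      then show ?thesis by simp
    qed
    ultimately have "m * t ^ n \<le> (d * t + c) ^ n"
      by (meson le_trans mult_le_mono2)
    then have "real (m * t ^ n) \<le> real ((d * t + c) ^ n)"
      by (simp only: of_nat_le_iff)
    then have "real m * real t ^ n \<le> (real d * real t + real c) ^ n"
      by simp
    then have "real m \<le> (real d * real t + real c) ^ n / real t ^ n"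
      using t by (simp add: field_simps)
    also have "\<dots> = ((real d * real t + real c) / real t) ^ n"
      by (simp add: power_divide)
    also have "(real d * real t + real c) / real t = real d + real c / real t"
      using t by (simp add: field_simps)
    finally show ?thesis .
  qed
  have lim: "(\<lambda>t. (real d + real c / real t) ^ n) \<longlonglongrightarrow> (real d + 0) ^ n"
    by (intro tendsto_intros lim_const_over_n)
  have "real m \<le> (real d + 0) ^ n"
    by (rule LIMSEQ_le_const[OF lim]) (use key in auto)
  then have "real m \<le> real (d ^ n)" by simp
  then show ?thesis by (simp only: of_nat_le_iff)
qed

definition emb :: "'a::idom mpoly \<Rightarrow> 'a fract mpoly" where
  "emb f = Poly_Mapping.map (\<lambda>x. Fraction_Field.Fract x 1) f"

lemma lookup_emb: "Poly_Mapping.lookup (emb f) m = Fraction_Field.Fract (Poly_Mapping.lookup f m) 1"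
  by (simp add: emb_def map.rep_eq when_def fract_collapse)

lemma Fract1_eq: "Fraction_Field.Fract (a::'a::idom) 1 = Fraction_Field.Fract b 1 \<longleftrightarrow> a = b"
  by (simp add: eq_fract)

lemma Fract1_zero: "Fraction_Field.Fract (a::'a::idom) 1 = 0 \<longleftrightarrow> a = 0"
  by (simp add: Zero_fract_def eq_fract)

lemma keys_emb: "Poly_Mapping.keys (emb f) = Poly_Mapping.keys f"
  by (auto simp: in_keys_iff lookup_emb Fract1_zero)

lemma emb_inj: "emb f = emb g \<Longrightarrow> f = g"
proof (rule poly_mapping_eqI)
  fix k assume "emb f = emb g"
  then have "Poly_Mapping.lookup (emb f) k = Poly_Mapping.lookup (emb g) k" by simp
  then show "Poly_Mapping.lookup f k = Poly_Mapping.lookup g k" by (simp add: lookup_emb Fract1_eq)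
qed

lemma Fract_sum1: "(\<Sum>i\<in>I. Fraction_Field.Fract (g i) 1) = Fraction_Field.Fract (sum g I :: 'a::idom) 1"
  by (induction I rule: infinite_finite_induct) (simp_all add: fract_collapse)

lemma common_denom:
  fixes u :: "'i \<Rightarrow> 'a::idom fract"
  shows "finite I \<Longrightarrow> \<exists>D. D \<noteq> 0 \<and> (\<forall>i\<in>I. \<exists>c. Fraction_Field.Fract D 1 * u i = Fraction_Field.Fract c 1)"
proof (induction I rule: finite_induct)
  case empty
  show ?case by (intro exI[of _ 1]) simp
next
  case (insert x F)
  then obtain D where D: "D \<noteq> 0" "\<forall>i\<in>F. \<exists>c. Fraction_Field.Fract D 1 * u i = Fraction_Field.Fract c 1" by blast
  obtain a b where ab: "u x = Fraction_Field.Fract a b" "b \<noteq> 0" by (cases "u x")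
  have "\<forall>i\<in>insert x F. \<exists>c. Fraction_Field.Fract (D * b) 1 * u i = Fraction_Field.Fract c 1"
  proof
    fix i assume "i \<in> insert x F"
    then show "\<exists>c. Fraction_Field.Fract (D * b) 1 * u i = Fraction_Field.Fract c 1"
    proof
      assume "i = x"
      then have "Fraction_Field.Fract (D * b) 1 * u i = Fraction_Field.Fract (D * a) 1"
        using ab by (simp add: eq_fract algebra_simps)
      then show ?thesis by blast
    next
      assume "i \<in> F"
      then obtain c where "Fraction_Field.Fract D 1 * u i = Fraction_Field.Fract c 1" using D by blast
      note cD = this
      have "Fraction_Field.Fract (D * b) 1 * u i = Fraction_Field.Fract b 1 * (Fraction_Field.Fract D 1 * u i)"
        by (simp add: mult.commute mult.left_commute)
      also have "\<dots> = Fraction_Field.Fract (b * c) 1" using cD by simp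
      finally have "Fraction_Field.Fract (D * b) 1 * u i = Fraction_Field.Fract (b * c) 1" .
      then show ?thesis by blast
    qed
  qed
  then show ?case using D ab by (intro exI[of _ "D * b"]) simp
qed

lemma indep_bound:
  fixes w :: "'i \<Rightarrow> 'a::idom mpoly"
  assumes fin: "finite I" and finM: "finite M"
    and ind: "\<And>c. (\<Sum>i\<in>I. Const (c i) * w i) = 0 \<Longrightarrow> (\<forall>i\<in>I. c i = 0)"
    and supp: "\<And>i. i \<in> I \<Longrightarrow> Poly_Mapping.keys (w i) \<subseteq> M"
  shows "card I \<le> card M"
proof -
  interpret V: vector_space "\<lambda>(s::'a fract) (v::'a fract mpoly). Const s * v"
    by unfold_locales (simp_all add: Const_def algebra_simps single_add mult_single)
  have winj: "inj_on w I"
  proof (rule inj_onI, rule ccontr)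
    fix i j assume ij: "i \<in> I" "j \<in> I" "w i = w j" "i \<noteq> j"
    define c where "c = (\<lambda>k. if k = i then (1::'a) else if k = j then -1 else 0)"
    have Cm1: "Const (-1::'a) = -1" by (simp add: Const_def single_uminus)
    have tm: "Const (c k) * w k = (if k = i then w i else 0) + (if k = j then - w j else 0)" for k
    proof -
      consider "k = i" | "k = j" | "k \<noteq> i" "k \<noteq> j" by blast
      then show ?thesis
      proof cases
        case 1 then show ?thesis using ij by (simp add: c_def Const_one)
      next
        case 2 then show ?thesis using ij by (simp add: c_def Cm1)
      next
        case 3 then show ?thesis by (simp add: c_def Const_zero)
      qed
    qed
    have "(\<Sum>k\<in>I. Const (c k) * w k) = (\<Sum>k\<in>I. (if k = i then w i else 0)) + (\<Sum>k\<in>I. (if k = j then - w j else 0))"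
      unfolding tm by (rule sum.distrib)
    also have "\<dots> = w i - w j" using ij fin by simp
    also have "\<dots> = 0" using ij by simp
    finally have "c i = 0" using ind ij by blast
    then show False by (simp add: c_def)
  qed
  have einj: "inj_on (emb \<circ> w) I"
    using winj emb_inj by (auto simp: inj_on_def)
  define A where "A = (emb \<circ> w) ` I"
  have cardA: "card A = card I" unfolding A_def using einj by (rule card_image)
  have finA: "finite A" unfolding A_def using fin by simp
  have indA: "V.independent A"
  proof (rule V.independent_if_scalars_zero[OF finA])
    fix f x assume s0: "(\<Sum>y\<in>A. Const (f y) * y) = 0" and x: "x \<in> A"
    define u where "u i = f (emb (w i))" for i
    have s1: "(\<Sum>i\<in>I. Const (u i) * emb (w i)) = 0"
    proof -
      have "(\<Sum>y\<in>A. Const (f y) * y) = (\<Sum>i\<in>I. Const (u i) * emb (w i))"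
        unfolding A_def by (subst sum.reindex[OF einj]) (simp add: u_def)
      then show ?thesis using s0 by simp
    qed
    obtain D where D: "D \<noteq> 0" "\<forall>i\<in>I. \<exists>c. Fraction_Field.Fract D 1 * u i = Fraction_Field.Fract c 1"
      using common_denom[OF fin, of u] by blast
    then obtain c where c: "\<forall>i\<in>I. Fraction_Field.Fract D 1 * u i = Fraction_Field.Fract (c i) 1"
      using bchoice[OF D(2)] by blast
    have "(\<Sum>i\<in>I. Const (c i) * w i) = 0"
    proof (rule poly_mapping_eqI)
      fix m
      have "0 = Poly_Mapping.lookup (\<Sum>i\<in>I. Const (u i) * emb (w i)) m" using s1 by simp
      also have "\<dots> = (\<Sum>i\<in>I. u i * Fraction_Field.Fract (Poly_Mapping.lookup (w i) m) 1)"
        by (simp add: lookup_sum lookup_Const_mult lookup_emb)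
      finally have "Fraction_Field.Fract D 1 * (\<Sum>i\<in>I. u i * Fraction_Field.Fract (Poly_Mapping.lookup (w i) m) 1) = 0" by simp
      moreover have "Fraction_Field.Fract D 1 * (\<Sum>i\<in>I. u i * Fraction_Field.Fract (Poly_Mapping.lookup (w i) m) 1)
          = (\<Sum>i\<in>I. Fraction_Field.Fract (c i * Poly_Mapping.lookup (w i) m) 1)"
        unfolding sum_distrib_left
      proof (rule sum.cong[OF refl])
        fix i assume "i \<in> I"
        then have "Fraction_Field.Fract D 1 * (u i * Fraction_Field.Fract (Poly_Mapping.lookup (w i) m) 1)
           = (Fraction_Field.Fract D 1 * u i) * Fraction_Field.Fract (Poly_Mapping.lookup (w i) m) 1"
          by (simp only: mult.assoc)
        also have "\<dots> = Fraction_Field.Fract (c i * Poly_Mapping.lookup (w i) m) 1"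
          using c \<open>i \<in> I\<close> by simp
        finally show "Fraction_Field.Fract D 1 * (u i * Fraction_Field.Fract (Poly_Mapping.lookup (w i) m) 1)
           = Fraction_Field.Fract (c i * Poly_Mapping.lookup (w i) m) 1" .
      qed
      ultimately have "(\<Sum>i\<in>I. Fraction_Field.Fract (c i * Poly_Mapping.lookup (w i) m) 1) = 0"
        by simp
      then have "(\<Sum>i\<in>I. c i * Poly_Mapping.lookup (w i) m) = 0"
        by (simp add: Fract_sum1 Fract1_zero)
      then show "Poly_Mapping.lookup (\<Sum>i\<in>I. Const (c i) * w i) m = Poly_Mapping.lookup 0 m"
        by (simp add: lookup_sum lookup_Const_mult)
    qed
    then have c0: "\<forall>i\<in>I. c i = 0" by (rule ind)
    from x obtain i where i: "i \<in> I" "x = emb (w i)" unfolding A_def by auto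
    have "Fraction_Field.Fract D 1 * u i = Fraction_Field.Fract (c i) 1" using c i(1) by blast
    also have "\<dots> = 0" using c0 i(1) by (simp add: fract_collapse)
    finally have "Fraction_Field.Fract D 1 * u i = 0" .
    moreover have "Fraction_Field.Fract D 1 \<noteq> 0" using D by (simp add: Fract1_zero)
    ultimately have "u i = 0" by simp
    then show "f x = 0" using i by (simp add: u_def)
  qed
  have spanA: "A \<subseteq> V.span ((\<lambda>m. Poly_Mapping.single m 1) ` M)"
  proof
    fix v assume "v \<in> A"
    then obtain i where i: "i \<in> I" "v = emb (w i)" unfolding A_def by auto
    have kv: "Poly_Mapping.keys v \<subseteq> M" using supp[OF i(1)] i(2) by (simp add: keys_emb)
    have "v = (\<Sum>m\<in>M. Const (Poly_Mapping.lookup v m) * Poly_Mapping.single m 1)"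
    proof (rule poly_mapping_eqI)
      fix k
      have "Poly_Mapping.lookup (\<Sum>m\<in>M. Const (Poly_Mapping.lookup v m) * Poly_Mapping.single m 1) k
          = (\<Sum>m\<in>M. if k = m then Poly_Mapping.lookup v m else 0)"
        unfolding lookup_sum by (intro sum.cong refl) (simp add: lookup_Const_mult lookup_single when_def)
      also have "\<dots> = Poly_Mapping.lookup v k"
        using kv finM by (auto simp: in_keys_iff)
      finally show "Poly_Mapping.lookup v k = Poly_Mapping.lookup (\<Sum>m\<in>M. Const (Poly_Mapping.lookup v m) * Poly_Mapping.single m 1) k" by simp
    qed
    also have "\<dots> \<in> V.span ((\<lambda>m. Poly_Mapping.single m 1) ` M)"
      by (intro V.span_sum V.span_scale V.span_base) auto
    finally show "v \<in> V.span ((\<lambda>m. Poly_Mapping.single m 1) ` M)" .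
  qed
  have "card A \<le> card ((\<lambda>m. Poly_Mapping.single m (1::'a fract)) ` M)"
    using V.independent_span_bound[OF _ indA spanA] finM by simp
  also have "\<dots> \<le> card M" by (rule card_image_le[OF finM])
  finally show ?thesis using cardA by simp
qed

lemma common_denom_B:
  assumes "finite S" "S \<subseteq> frac_B n"
  shows "\<exists>B\<in>polys_n n. B \<noteq> (0::'a::idom mpoly) \<and>
    (\<forall>s\<in>S. \<exists>P\<in>polys_n n. s * Fraction_Field.Fract B 1 = Fraction_Field.Fract P 1)"
  using assms
proof (induction S rule: finite_induct)
  case empty show ?case using polys_n_one by (intro bexI[of _ 1]) auto
next
  case (insert x F)
  then obtain B where B: "B \<in> polys_n n" "B \<noteq> 0"
    "\<forall>s\<in>F. \<exists>P\<in>polys_n n. s * Fraction_Field.Fract B 1 = Fraction_Field.Fract P 1" by auto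
  from insert.prems obtain a b where ab: "x = Fraction_Field.Fract a b" "a \<in> polys_n n" "b \<in> polys_n n" "b \<noteq> 0"
    unfolding frac_B_def by auto
  have "\<forall>s\<in>insert x F. \<exists>P\<in>polys_n n. s * Fraction_Field.Fract (B * b) 1 = Fraction_Field.Fract P 1"
  proof
    fix s assume "s \<in> insert x F"
    then show "\<exists>P\<in>polys_n n. s * Fraction_Field.Fract (B * b) 1 = Fraction_Field.Fract P 1"
    proof
      assume "s = x"
      have "s * Fraction_Field.Fract (B * b) 1 = Fraction_Field.Fract (a * B) 1"
        using ab \<open>s = x\<close> by (simp add: eq_fract algebra_simps)
      then show ?thesis using polys_n_mult[OF ab(2) B(1)] by blast
    next
      assume "s \<in> F"
      then obtain P where P: "P \<in> polys_n n" "s * Fraction_Field.Fract B 1 = Fraction_Field.Fract P 1"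
        using B by blast
      have "s * Fraction_Field.Fract (B * b) 1 = (s * Fraction_Field.Fract B 1) * Fraction_Field.Fract b 1"
        by (simp add: mult.assoc)
      also have "\<dots> = Fraction_Field.Fract (P * b) 1" using P by simp
      finally show ?thesis using polys_n_mult[OF P(1) ab(3)] by blast
    qed
  qed
  moreover have "B * b \<noteq> 0" using B(2) ab(4) by simp
  ultimately show ?case using polys_n_mult[OF B(1) ab(3)] by blast
qed

lemma main_bound:
  fixes \<phi> :: "'a::idom mpoly \<Rightarrow> 'a mpoly"
  assumes hom: "is_Kalg_hom n \<phi>" and inj: "inj_on \<phi> (polys_n n)"
    and deg: "\<forall>i<n. tdeg (\<phi> (Var i)) \<le> d"
    and finS: "finite S" and SB: "S \<subseteq> frac_B n" and li: "lin_indep_over (frac_img n \<phi>) S"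
  shows "card S \<le> d ^ n"
proof -
  obtain B where B: "B \<in> polys_n n" "B \<noteq> 0"
    "\<forall>s\<in>S. \<exists>P\<in>polys_n n. s * Fraction_Field.Fract B 1 = Fraction_Field.Fract P 1"
    using common_denom_B[OF finS SB] by blast
  have "\<forall>s\<in>S. \<exists>P. P \<in> polys_n n \<and> s * Fraction_Field.Fract B 1 = Fraction_Field.Fract P 1"
    using B(3) by blast
  from bchoice[OF this] obtain P where P: "\<forall>s\<in>S. P s \<in> polys_n n \<and> s * Fraction_Field.Fract B 1 = Fraction_Field.Fract (P s) 1"
    by blast
  define D where "D = (\<Sum>s\<in>S. tdeg (P s))"
  have H: "card S * ((t + n) choose n) \<le> ((D + d * t) + n) choose n" for t
  proof -
    define I where "I = S \<times> Mon n t"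
    define w where "w = (\<lambda>(s, a). P s * \<phi> (Poly_Mapping.single a 1))"
    have finMt: "finite (Mon n t)" using Mon_card by blast
    have finI: "finite I" using finS finMt by (simp add: I_def)
    have finMT: "finite (Mon n (D + d * t))" using Mon_card by blast
    have ind: "\<forall>i\<in>I. c i = 0" if sc: "(\<Sum>i\<in>I. Const (c i) * w i) = 0" for c
    proof -
      define h where "h s = (\<Sum>a\<in>Mon n t. Const (c (s, a)) * Poly_Mapping.single a 1)" for s
      have ka: "Poly_Mapping.keys a \<subseteq> {..<n}" if "a \<in> Mon n t" for a
        using that by (simp add: Mon_def)
      have hin: "h s \<in> polys_n n" for s
        unfolding h_def by (intro polys_n_sum polys_n_mult polys_n_Const polys_n_single ka)
      have phih: "\<phi> (h s) = (\<Sum>a\<in>Mon n t. Const (c (s, a)) * \<phi> (Poly_Mapping.single a 1))" for s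
      proof -
        have "\<phi> (h s) = (\<Sum>a\<in>Mon n t. \<phi> (Const (c (s, a)) * Poly_Mapping.single a 1))"
          unfolding h_def by (rule hom_sum[OF hom]) (intro polys_n_mult polys_n_Const polys_n_single ka)
        also have "\<dots> = (\<Sum>a\<in>Mon n t. Const (c (s, a)) * \<phi> (Poly_Mapping.single a 1))"
          by (intro sum.cong refl hom_smult[OF hom] polys_n_single ka)
        finally show ?thesis .
      qed
      have sum0: "(\<Sum>s\<in>S. P s * \<phi> (h s)) = 0"
      proof -
        have "(\<Sum>s\<in>S. P s * \<phi> (h s)) = (\<Sum>s\<in>S. \<Sum>a\<in>Mon n t. P s * (Const (c (s, a)) * \<phi> (Poly_Mapping.single a 1)))"
          by (simp only: phih sum_distrib_left)
        also have "\<dots> = (\<Sum>s\<in>S. \<Sum>a\<in>Mon n t. Const (c (s, a)) * w (s, a))"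
          unfolding w_def by (intro sum.cong refl) (simp only: prod.case mult.left_commute)
        also have "\<dots> = (\<Sum>i\<in>I. Const (c i) * w i)"
          unfolding I_def by (subst sum.cartesian_product) (simp add: case_prod_unfold)
        finally show ?thesis using sc by simp
      qed
      have fr: "(\<Sum>s\<in>S. Fraction_Field.Fract (\<phi> (h s)) 1 * s) = 0"
      proof -
        have "(\<Sum>s\<in>S. Fraction_Field.Fract (\<phi> (h s)) 1 * s) * Fraction_Field.Fract B 1
            = (\<Sum>s\<in>S. Fraction_Field.Fract (\<phi> (h s)) 1 * (s * Fraction_Field.Fract B 1))"
          by (simp add: sum_distrib_right mult.assoc)
        also have "\<dots> = (\<Sum>s\<in>S. Fraction_Field.Fract (P s * \<phi> (h s)) 1)"
        proof (rule sum.cong[OF refl])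
          fix s assume "s \<in> S"
          then have "s * Fraction_Field.Fract B 1 = Fraction_Field.Fract (P s) 1" using P by blast
          then show "Fraction_Field.Fract (\<phi> (h s)) 1 * (s * Fraction_Field.Fract B 1) = Fraction_Field.Fract (P s * \<phi> (h s)) 1"
            by (simp add: mult.commute)
        qed
        also have "\<dots> = Fraction_Field.Fract (\<Sum>s\<in>S. P s * \<phi> (h s)) 1" by (rule Fract_sum1)
        also have "\<dots> = 0" using sum0 by (simp add: fract_collapse)
        finally have "(\<Sum>s\<in>S. Fraction_Field.Fract (\<phi> (h s)) 1 * s) * Fraction_Field.Fract B 1 = 0" .
        moreover have "Fraction_Field.Fract B 1 \<noteq> 0" using B(2) by (simp add: Fract1_zero)
        ultimately show ?thesis by simp
      qed
      have inL: "\<forall>s\<in>S. Fraction_Field.Fract (\<phi> (h s)) 1 \<in> frac_img n \<phi>"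
      proof
        fix s
        have "\<exists>a b. Fraction_Field.Fract (\<phi> (h s)) 1 = Fraction_Field.Fract (\<phi> a) (\<phi> b) \<and>
            a \<in> polys_n n \<and> b \<in> polys_n n \<and> b \<noteq> 0"
          using hin[of s] polys_n_one hom_one[OF hom] by (intro exI[of _ "h s"] exI[of _ 1]) simp
        then show "Fraction_Field.Fract (\<phi> (h s)) 1 \<in> frac_img n \<phi>" by (simp add: frac_img_def)
      qed
      have "\<forall>c. (\<forall>s\<in>S. c s \<in> frac_img n \<phi>) \<and> (\<Sum>s\<in>S. c s * s) = 0 \<longrightarrow> (\<forall>s\<in>S. c s = 0)"
        using li by (simp add: lin_indep_over_def)
      from this[THEN spec, of "\<lambda>s. Fraction_Field.Fract (\<phi> (h s)) 1"]
      have z: "\<forall>s\<in>S. Fraction_Field.Fract (\<phi> (h s)) 1 = 0" using inL fr by blast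
      have h0: "h s = 0" if "s \<in> S" for s
      proof -
        have "\<phi> (h s) = 0" using z that by (simp add: Fract1_zero)
        then have "\<phi> (h s) = \<phi> 0" by (simp add: hom_zero[OF hom])
        then show ?thesis using inj_onD[OF inj _ hin[of s] polys_n_zero[of n]] by blast
      qed
      have lh: "Poly_Mapping.lookup (h s) a = c (s, a)" if "a \<in> Mon n t" for s a
      proof -
        have "Poly_Mapping.lookup (h s) a = (\<Sum>a'\<in>Mon n t. if a' = a then c (s, a') else 0)"
          unfolding h_def lookup_sum by (intro sum.cong refl) (simp add: Const_mult_single lookup_single when_def)
        also have "\<dots> = c (s, a)" using that finMt by simp
        finally show ?thesis .
      qed
      show ?thesis
      proof
        fix i assume "i \<in> I"
        then obtain s a where "i = (s, a)" "s \<in> S" "a \<in> Mon n t" by (auto simp: I_def)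
        then show "c i = 0" using lh[of a s] h0[of s] by simp
      qed
    qed
    have supp: "Poly_Mapping.keys (w i) \<subseteq> Mon n (D + d * t)" if "i \<in> I" for i
    proof
      fix m assume m: "m \<in> Poly_Mapping.keys (w i)"
      from that obtain s a where sa: "i = (s, a)" "s \<in> S" "a \<in> Mon n t" by (auto simp: I_def)
      have ka: "Poly_Mapping.keys a \<subseteq> {..<n}" "mdeg a \<le> t" using sa by (auto simp: Mon_def)
      have Ps: "P s \<in> polys_n n" using P sa by blast
      have win: "w i \<in> polys_n n"
        using sa polys_n_mult[OF Ps hom_mono_in[OF hom ka(1)]] by (simp add: w_def)
      have "tdeg (P s) \<le> D" unfolding D_def by (rule member_le_sum) (use finS sa in auto)
      moreover have "tdeg (\<phi> (Poly_Mapping.single a 1)) \<le> d * t"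
        using hom_mono[OF hom deg ka(1)] mult_le_mono2[OF ka(2), of d] by (rule le_trans)
      ultimately have "tdeg (w i) \<le> D + d * t"
        using tdeg_mult[of "P s" "\<phi> (Poly_Mapping.single a 1)"] sa by (simp add: w_def)
      then have "mdeg m \<le> D + d * t" using tdeg_ge[OF m] by linarith
      moreover have "Poly_Mapping.keys m \<subseteq> {..<n}" using win m by (simp add: polys_n_def)
      ultimately show "m \<in> Mon n (D + d * t)" by (simp add: Mon_def)
    qed
    have "card I \<le> card (Mon n (D + d * t))"
      by (rule indep_bound[where w=w, OF finI finMT]) (use ind supp in blast)+
    moreover have "card I = card S * ((t + n) choose n)"
      using Mon_card[of n t] by (simp add: I_def card_cartesian_product)
    moreover have "card (Mon n (D + d * t)) = ((D + d * t) + n) choose n"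
      using Mon_card by blast
    ultimately show ?thesis by simp
  qed
  show ?thesis by (rule asym_bound[OF H])
qed

lemma ext_degree_bounds:
  fixes \<phi> :: "'a::idom mpoly \<Rightarrow> 'a mpoly"
  assumes hom: "is_Kalg_hom n \<phi>" and inj: "inj_on \<phi> (polys_n n)"
    and deg: "\<forall>i<n. tdeg (\<phi> (Var i)) \<le> d"
  shows "1 \<le> ext_degree (frac_B n) (frac_img n \<phi>) \<and> ext_degree (frac_B n) (frac_img n \<phi>) \<le> enat (d ^ n)"
proof
  have "\<exists>a b. (1::'a mpoly fract) = Fraction_Field.Fract a b \<and> a \<in> polys_n n \<and> b \<in> polys_n n \<and> b \<noteq> 0"
    using polys_n_one by (intro exI[of _ 1]) (simp add: fract_collapse)
  then have "(1::'a mpoly fract) \<in> frac_B n" by (simp add: frac_B_def)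
  moreover have "lin_indep_over (frac_img n \<phi>) {1}" by (simp add: lin_indep_over_def)
  ultimately have "enat (card {1::'a mpoly fract}) \<in>
      {enat (card S) | S. finite S \<and> S \<subseteq> frac_B n \<and> lin_indep_over (frac_img n \<phi>) S}"
    by blast
  then have "enat (card {1::'a mpoly fract}) \<le> ext_degree (frac_B n) (frac_img n \<phi>)"
    unfolding ext_degree_def by (rule Sup_upper)
  then show "1 \<le> ext_degree (frac_B n) (frac_img n \<phi>)" by (simp add: one_enat_def)
next
  show "ext_degree (frac_B n) (frac_img n \<phi>) \<le> enat (d ^ n)"
    unfolding ext_degree_def
  proof (rule Sup_least)
    fix x assume "x \<in> {enat (card S) | S. finite S \<and> S \<subseteq> frac_B n \<and> lin_indep_over (frac_img n \<phi>) S}"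
    then obtain S where "x = enat (card S)" "finite S" "S \<subseteq> frac_B n" "lin_indep_over (frac_img n \<phi>) S"
      by blast
    then show "x \<le> enat (d ^ n)" using main_bound[OF hom inj deg] by simp
  qed
qed

lemma no_pk:
  fixes \<phi> :: "'a::idom mpoly \<Rightarrow> 'a mpoly"
  assumes hom: "is_Kalg_hom n \<phi>" and inj: "inj_on \<phi> (polys_n n)"
    and deg: "\<forall>i<n. tdeg (\<phi> (Var i)) \<le> d" and p: "d ^ n < p"
  shows "\<not> (\<exists>k. ext_degree (frac_B n) (frac_img n \<phi>) = enat (p * k))"
proof
  assume "\<exists>k. ext_degree (frac_B n) (frac_img n \<phi>) = enat (p * k)"
  then obtain k where k: "ext_degree (frac_B n) (frac_img n \<phi>) = enat (p * k)" by blast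
  have b: "1 \<le> enat (p * k)" "enat (p * k) \<le> enat (d ^ n)"
    using ext_degree_bounds[OF hom inj deg] k by auto
  from b(1) have "k \<noteq> 0" by (auto simp: one_enat_def)
  then have "p \<le> p * k" by simp
  moreover from b(2) have "p * k \<le> d ^ n" by simp
  ultimately show False using p by linarith
qed

theorem mainTheorem3:
  fixes n p d :: nat
  assumes "n \<ge> 1" and "d \<ge> 1" and "prime p" and "p > d ^ n"
    and "CHAR('a::idom) = p"
  shows "CJC n p d TYPE('a) \<longleftrightarrow> NJC n p d TYPE('a)"
proof -
  have key: "\<not> (\<exists>k. ext_degree (frac_B n) (frac_img n \<phi>) = enat (p * k))"
    if "is_Kalg_hom n \<phi> \<and> inj_on \<phi> (polys_n n) \<and> (\<forall>i<n. tdeg (\<phi> (Var i)) \<le> d)"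
    for \<phi> :: "'a mpoly \<Rightarrow> 'a mpoly"
    using no_pk[of n \<phi> d p] that assms(4) by blast
  show ?thesis unfolding CJC_def NJC_def
    apply (rule iffI; intro allI impI)
    subgoal premises prems for \<phi>
      using prems(1)[rule_format, OF prems(2)] key[OF prems(2)] by simp
    subgoal premises prems for \<phi>
      using prems(1)[rule_format, OF prems(2)] key[OF prems(2)] by simp
    done
qed

end
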